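(* For every $\varepsilon>0$, any deterministic algorithm that, given query access to the distance matrix, estimates the graphic TSP cost (respectively the $(1,2)$-TSP cost) of an $n$-vertex instance to within a factor $(2-\varepsilon)$ requires $\Omega(\varepsilon n^2)$ queries.
   Context: For a connected unweighted undirected graph $G=(V,E)$ with $n\ge 2$ vertices, the graphic TSP cost is $\min \sum_{i=1}^{n} d_G(v_i,v_{i+1})$ over cyclic orderings $(v_1,\dots,v_n)$ of $V$ ($v_{n+1}=v_1$), where $d_G$ is shortest-path distance; the distance matrix has entries $d_G(u,v)$. A $(1,2)$-TSP instance is a metric on $n$ points with all distances between distinct points in $\{1,2\}$, cost defined analogously. Estimating to within a factor $c$ means outputting $X$ with $\mathrm{OPT}\le X\le c\,\mathrm{OPT}$. *)

theory Defs
  imports Complex_Main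
begin

definition is_graph :: "nat \<Rightarrow> (nat \<Rightarrow> nat \<Rightarrow> bool) \<Rightarrow> bool" where
  "is_graph n E \<longleftrightarrow> (\<forall>u v. E u v \<longrightarrow> u < n \<and> v < n \<and> u \<noteq> v \<and> E v u)"

definition is_walk :: "(nat \<Rightarrow> nat \<Rightarrow> bool) \<Rightarrow> nat list \<Rightarrow> bool" where
  "is_walk E p \<longleftrightarrow> p \<noteq> [] \<and> (\<forall>i. Suc i < length p \<longrightarrow> E (p ! i) (p ! Suc i))"

definition connected_graph :: "nat \<Rightarrow> (nat \<Rightarrow> nat \<Rightarrow> bool) \<Rightarrow> bool" where
  "connected_graph n E \<longleftrightarrow> (\<forall>u<n. \<forall>v<n. \<exists>p. is_walk E p \<and> hd p = u \<and> last p = v)"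

definition gdist :: "(nat \<Rightarrow> nat \<Rightarrow> bool) \<Rightarrow> nat \<Rightarrow> nat \<Rightarrow> nat" where
  "gdist E u v = (LEAST k. \<exists>p. is_walk E p \<and> hd p = u \<and> last p = v \<and> length p = Suc k)"

text \<open>Distance matrix of an instance, as a total function (value 0 outside the index range).\<close>

definition graphic_instance :: "nat \<Rightarrow> (nat \<Rightarrow> nat \<Rightarrow> nat) \<Rightarrow> bool" where
  "graphic_instance n M \<longleftrightarrow> (\<exists>E. is_graph n E \<and> connected_graph n E \<and>
      M = (\<lambda>i j. if i < n \<and> j < n then gdist E i j else 0))"

definition onetwo_instance :: "nat \<Rightarrow> (nat \<Rightarrow> nat \<Rightarrow> nat) \<Rightarrow> bool" where
  "onetwo_instance n M \<longleftrightarrow>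
     (\<forall>i j. \<not> (i < n \<and> j < n) \<longrightarrow> M i j = 0) \<and>
     (\<forall>i<n. M i i = 0) \<and>
     (\<forall>i<n. \<forall>j<n. M i j = M j i) \<and>
     (\<forall>i<n. \<forall>j<n. i \<noteq> j \<longrightarrow> M i j \<in> {1, 2})"

definition tsp_cost :: "nat \<Rightarrow> (nat \<Rightarrow> nat \<Rightarrow> nat) \<Rightarrow> nat" where
  "tsp_cost n M = Min {(\<Sum>i<n. M (\<sigma> i) (\<sigma> (Suc i mod n))) | \<sigma>. bij_betw \<sigma> {..<n} {..<n}}"

section \<open>Deterministic adaptive query algorithms (decision trees)\<close>

datatype qtree = Output real | Query nat nat "nat \<Rightarrow> qtree"

primrec run :: "qtree \<Rightarrow> (nat \<Rightarrow> nat \<Rightarrow> nat) \<Rightarrow> real" where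
  "run (Output x) M = x"
| "run (Query i j f) M = run (f (M i j)) M"

primrec num_queries :: "qtree \<Rightarrow> (nat \<Rightarrow> nat \<Rightarrow> nat) \<Rightarrow> nat" where
  "num_queries (Output x) M = 0"
| "num_queries (Query i j f) M = Suc (num_queries (f (M i j)) M)"

definition estimates_within ::
  "(nat \<Rightarrow> (nat \<Rightarrow> nat \<Rightarrow> nat) \<Rightarrow> bool) \<Rightarrow> nat \<Rightarrow> real \<Rightarrow> qtree \<Rightarrow> bool" where
  "estimates_within P n c T \<longleftrightarrow> (\<forall>M. P n M \<longrightarrow>
      real (tsp_cost n M) \<le> run T M \<and> run T M \<le> c * real (tsp_cost n M))"

end

theory Submission
  imports Defs
begin


primrec qset :: "qtree \<Rightarrow> (nat \<Rightarrow> nat \<Rightarrow> nat) \<Rightarrow> (nat \<times> nat) set" where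
  "qset (Output x) M = {}"
| "qset (Query i j f) M = insert (i,j) (qset (f (M i j)) M)"

lemma qset_finite: "finite (qset T M)"
  by (induction T) auto

lemma qset_card: "card (qset T M) \<le> num_queries T M"
proof (induction T)
  case (Output x) then show ?case by simp
next
  case (Query i j f)
  have "card (qset (Query i j f) M) \<le> Suc (card (qset (f (M i j)) M))"
    using qset_finite by (simp add: card_insert_if)
  also have "\<dots> \<le> num_queries (Query i j f) M" using Query.IH by simp
  finally show ?case .
qed

lemma run_agree:
  "(\<And>i j. (i,j) \<in> qset T M \<Longrightarrow> M' i j = M i j) \<Longrightarrow> run T M' = run T M"
proof (induction T)
  case (Output x) then show ?case by simp
next
  case (Query i j f)
  have e: "M' i j = M i j" using Query.prems by simp
  have "run (f (M i j)) M' = run (f (M i j)) M"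
    using Query.prems by (intro Query.IH) auto
  then show ?case using e by simp
qed

fun pc :: "(nat \<Rightarrow> nat \<Rightarrow> nat) \<Rightarrow> nat list \<Rightarrow> nat" where
  "pc M (a#b#r) = M a b + pc M (b#r)"
| "pc M _ = 0"

lemma pc_append: "pc M (xs @ y # ys) = pc M (xs @ [y]) + pc M (y # ys)"
proof (induction xs)
  case Nil then show ?case by simp
next
  case (Cons x xs) then show ?case by (cases xs) auto
qed

lemma pc_snoc: "p \<noteq> [] \<Longrightarrow> pc M (p @ [u]) = pc M p + M (last p) u"
proof (induction p)
  case Nil then show ?case by simp
next
  case (Cons x xs) then show ?case by (cases xs) auto
qed

lemma pc_ins: "pc M (a @ u # w # u' # b) + M u u' = pc M (a @ u # u' # b) + M u w + M w u'"
  using pc_append[of M a u "w # u' # b"] pc_append[of M a u "u' # b"] by simp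

lemma slot_count:
  assumes "\<forall>a u u' b. c = a @ u # u' # b \<longrightarrow> P u \<or> P u'"
  shows "length c \<le> 2 * length (filter P c) + 1"
  using assms
proof (induction c rule: induct_list012)
  case (3 x y zs)
  have h1: "\<forall>a u u' b. y # zs = a @ u # u' # b \<longrightarrow> P u \<or> P u'"
    using "3.prems" by (metis append_Cons)
  have h2: "\<forall>a u u' b. zs = a @ u # u' # b \<longrightarrow> P u \<or> P u'"
    using "3.prems" by (metis append_Cons)
  have "P x \<or> P y" using "3.prems" by (metis append_Nil)
  then show ?case using "3.IH" h1 h2 by auto
qed auto

lemma slot_insert:
  assumes "distinct t" "t \<noteq> []" "w \<notin> set t" "t @ [hd t] = a @ u # u' # b"
  shows "\<exists>t'. distinct t' \<and> set t' = insert w (set t) \<and> t' \<noteq> [] \<and> length t' = Suc (length t)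
     \<and> t' @ [hd t'] = a @ u # w # u' # b"
proof -
  have l: "last (u' # b) = hd t" using assms(4) by (metis last_ConsR last_appendR last_snoc list.distinct(1))
  have tt: "t = a @ u # butlast (u' # b)"
    using arg_cong[OF assms(4), of butlast] by (simp add: butlast_append)
  define t' where "t' = a @ u # w # butlast (u' # b)"
  have h: "hd t' = hd t" unfolding t'_def by (subst tt) (cases a; simp)
  have "t' @ [hd t'] = a @ u # w # (butlast (u' # b) @ [last (u' # b)])"
    unfolding h l unfolding t'_def by simp
  also have "butlast (u' # b) @ [last (u' # b)] = u' # b" by (rule append_butlast_last_id) simp
  finally have e: "t' @ [hd t'] = a @ u # w # u' # b" .
  have "distinct t' \<and> set t' = insert w (set t) \<and> t' \<noteq> [] \<and> length t' = Suc (length t)"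
    using assms(1,3) tt unfolding t'_def by (subst (asm) (1 2) tt, subst (1 2) tt) auto
  then show ?thesis using e by blast
qed

lemma adj_distinct:
  assumes "distinct t" "length t \<ge> 2" "t @ [hd t] = a @ u # u' # b"
  shows "u \<noteq> u'"
proof (cases b)
  case Nil
  then have "t = a @ [u]" "u' = hd t" using assms(3) by auto
  then show ?thesis using assms(1,2) by (cases a) auto
next
  case (Cons z zs)
  have "t = a @ u # butlast (u' # b)"
    using arg_cong[OF assms(3), of butlast] by (simp add: butlast_append)
  then have "t = a @ u # u' # butlast b" using Cons by simp
  then show ?thesis using assms(1) by auto
qed




definition Bl :: "(nat \<times> nat) set \<Rightarrow> nat \<Rightarrow> nat \<Rightarrow> bool" where
  "Bl S u v \<longleftrightarrow> u \<noteq> v \<and> u \<noteq> 0 \<and> v \<noteq> 0 \<and> ((u,v) \<in> S \<or> (v,u) \<in> S)"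

definition MS :: "nat \<Rightarrow> (nat \<times> nat) set \<Rightarrow> nat \<Rightarrow> nat \<Rightarrow> nat" where
  "MS n S i j = (if i < n \<and> j < n then (if i = j then 0 else if Bl S i j then 2 else 1) else 0)"

definition dg :: "nat \<Rightarrow> (nat \<times> nat) set \<Rightarrow> nat \<Rightarrow> nat" where
  "dg n S w = card {u. u < n \<and> Bl S w u}"

lemma Bl_sym: "Bl S u v = Bl S v u"
  unfolding Bl_def by auto

lemma MS_le2: "MS n S i j \<le> 2"
  unfolding MS_def by auto

lemma MS_one: "i < n \<Longrightarrow> j < n \<Longrightarrow> i \<noteq> j \<Longrightarrow> \<not> Bl S i j \<Longrightarrow> MS n S i j = 1"
  unfolding MS_def by auto

lemma MS_ge1: "i < n \<Longrightarrow> j < n \<Longrightarrow> i \<noteq> j \<Longrightarrow> MS n S i j \<ge> 1"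
  unfolding MS_def by auto

lemma greedy:
  assumes L: "L \<subseteq> {..<n}" and dgL: "\<forall>v\<in>L. dg n S v < t"
  shows "p \<noteq> [] \<Longrightarrow> distinct p \<Longrightarrow> set p \<subseteq> L \<Longrightarrow> pc (MS n S) p + 1 = length p \<Longrightarrow>
    \<exists>p'. p' \<noteq> [] \<and> distinct p' \<and> set p' \<subseteq> L \<and> pc (MS n S) p' + 1 = length p' \<and> card (L - set p') < t"
proof (induction "card (L - set p)" arbitrary: p rule: less_induct)
  case less
  have fL: "finite L" using L finite_subset by blast
  show ?case
  proof (cases "card (L - set p) < t")
    case True then show ?thesis using less.prems by blast
  next
    case False
    define v where "v = last p"
    have vL: "v \<in> L" using less.prems(1,3) unfolding v_def by auto
    have sub: "{u\<in>L - set p. Bl S v u} \<subseteq> {u. u < n \<and> Bl S v u}" using L by auto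
    have "card {u\<in>L - set p. Bl S v u} \<le> dg n S v"
      unfolding dg_def by (rule card_mono) (use sub in auto)
    also have "\<dots> < t" using dgL vL by auto
    also have "\<dots> \<le> card (L - set p)" using False by simp
    finally have "card {u\<in>L - set p. Bl S v u} < card (L - set p)" .
    then have "\<not> (L - set p \<subseteq> {u\<in>L - set p. Bl S v u})"
      using card_mono[of "{u\<in>L - set p. Bl S v u}" "L - set p"] fL by auto
    then obtain u where u: "u \<in> L" "u \<notin> set p" "\<not> Bl S v u" by auto
    define p' where "p' = p @ [u]"
    have un: "u < n" "v < n" using u(1) vL L by auto
    have uv: "u \<noteq> v" using u(2) less.prems(1) unfolding v_def by auto
    have "pc (MS n S) p' = pc (MS n S) p + MS n S v u"
      unfolding p'_def v_def by (rule pc_snoc) (use less.prems in auto)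
    also have "MS n S v u = 1" using MS_one[of v n u S] un uv u(3) by auto
    finally have pcp: "pc (MS n S) p' + 1 = length p'" using less.prems(4) unfolding p'_def by simp
    have "L - set p' \<subset> L - set p" unfolding p'_def using u by auto
    then have "card (L - set p') < card (L - set p)" using fL by (intro psubset_card_mono) auto
    moreover have "p' \<noteq> []" "distinct p'" "set p' \<subseteq> L" using less.prems u unfolding p'_def by auto
    ultimately show ?thesis using pcp less.hyps by blast
  qed
qed

lemma insert_all:
  assumes "finite R"
  shows "R \<inter> set p = {} \<Longrightarrow> p \<noteq> [] \<Longrightarrow> distinct p \<Longrightarrow> set p \<union> R \<subseteq> {..<n} \<Longrightarrow> length p \<ge> 2 \<Longrightarrow>
    \<exists>t. distinct t \<and> set t = set p \<union> R \<and> t \<noteq> [] \<and> length t = length p + card R \<and>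
      pc (MS n S) (t @ [hd t]) \<le> pc (MS n S) (p @ [hd p]) + card R
         + 3 * card {w\<in>R. length p \<le> 2 * dg n S w + 2}"
  using assms
proof (induction R rule: finite_induct)
  case empty
  then show ?case by (intro exI[of _ p]) auto
next
  case (insert w F)
  obtain t where t: "distinct t" "set t = set p \<union> F" "t \<noteq> []" "length t = length p + card F"
    "pc (MS n S) (t @ [hd t]) \<le> pc (MS n S) (p @ [hd p]) + card F + 3 * card {w\<in>F. length p \<le> 2 * dg n S w + 2}"
    using insert by auto
  have wt: "w \<notin> set t" using t(2) insert by auto
  have wn: "w < n" using insert.prems by auto
  have tn: "set t \<subseteq> {..<n}" using t(2) insert.prems by auto
  have cF: "card (insert w F) = Suc (card F)" using insert by simp
  let ?M = "MS n S"
  show ?case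
  proof (cases "2 * dg n S w + 2 < length p")
    case True
    let ?P = "\<lambda>v. Bl S w v"
    have ex: "\<exists>a u u' b. t @ [hd t] = a @ u # u' # b \<and> \<not> ?P u \<and> \<not> ?P u'"
    proof (rule ccontr)
      assume "\<not> ?thesis"
      then have "\<forall>a u u' b. t @ [hd t] = a @ u # u' # b \<longrightarrow> ?P u \<or> ?P u'" by blast
      from slot_count[OF this] have c1: "length (t @ [hd t]) \<le> 2 * length (filter ?P (t @ [hd t])) + 1" .
      have "length (filter ?P (t @ [hd t])) \<le> length (filter ?P t) + 1" by simp
      also have "length (filter ?P t) = card ({x. ?P x} \<inter> set t)" using t(1) by (rule distinct_length_filter)
      also have "\<dots> \<le> dg n S w" unfolding dg_def by (rule card_mono) (use tn in auto)
      finally show False using c1 True t(4) by simp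
    qed
    then obtain a u u' b where s: "t @ [hd t] = a @ u # u' # b" "\<not> ?P u" "\<not> ?P u'" by blast
    obtain t' where t': "distinct t'" "set t' = insert w (set t)" "t' \<noteq> []" "length t' = Suc (length t)"
      "t' @ [hd t'] = a @ u # w # u' # b"
      using slot_insert[OF t(1) t(3) wt s(1)] by blast
    have st: "set (t @ [hd t]) = set t" using t(3) by (cases t) auto
    have uin: "u \<in> set t" "u' \<in> set t"
      using s(1) st by (metis Un_iff list.set_intros(1,2) set_append)+
    have m1: "?M u w = 1" using MS_one[of u n w S] uin wt tn wn s(2) Bl_sym by auto
    have m2: "?M w u' = 1" using MS_one[of w n u' S] uin wt tn wn s(3) by auto
    have m3: "?M u u' \<ge> 1"
      using MS_ge1[of u n u' S] uin tn adj_distinct[OF t(1) _ s(1)] insert.prems t(4) by auto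
    have "pc ?M (t' @ [hd t']) + ?M u u' = pc ?M (t @ [hd t]) + ?M u w + ?M w u'"
      unfolding t'(5) s(1) by (rule pc_ins)
    then have "pc ?M (t' @ [hd t']) \<le> pc ?M (t @ [hd t]) + 1" using m1 m2 m3 by simp
    moreover have "{w'\<in>insert w F. length p \<le> 2 * dg n S w' + 2} = {w'\<in>F. length p \<le> 2 * dg n S w' + 2}"
      using True by auto
    ultimately show ?thesis using t t' cF
      by (intro exI[of _ t']) auto
  next
    case False
    obtain x xs where txs: "t = x # xs" using t(3) by (cases t) auto
    have s: "t @ [hd t] = [] @ x # hd (xs @ [x]) # tl (xs @ [x])" using txs by simp
    obtain t' where t': "distinct t'" "set t' = insert w (set t)" "t' \<noteq> []" "length t' = Suc (length t)"
      "t' @ [hd t'] = [] @ x # w # hd (xs @ [x]) # tl (xs @ [x])"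
      using slot_insert[OF t(1) t(3) wt s] by blast
    have "pc ?M (t' @ [hd t']) + ?M x (hd (xs @ [x])) = pc ?M (t @ [hd t]) + ?M x w + ?M w (hd (xs @ [x]))"
      unfolding t'(5) s by (rule pc_ins)
    then have "pc ?M (t' @ [hd t']) \<le> pc ?M (t @ [hd t]) + 4" using MS_le2[of n S x w] MS_le2[of n S w "hd (xs @ [x])"] by linarith
    moreover have "{w'\<in>insert w F. length p \<le> 2 * dg n S w' + 2} = insert w {w'\<in>F. length p \<le> 2 * dg n S w' + 2}"
      using False by auto
    moreover have "card (insert w {w'\<in>F. length p \<le> 2 * dg n S w' + 2}) = Suc (card {w'\<in>F. length p \<le> 2 * dg n S w' + 2})"
      using insert(1,2) by simp
    ultimately show ?thesis using t t' cF
      by (intro exI[of _ t']) auto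
  qed
qed




lemma pc_sum: "pc M xs = (\<Sum>i < length xs - 1. M (xs!i) (xs!Suc i))"
proof (induction xs rule: induct_list012)
  case (3 x y zs)
  have "(\<Sum>i < length (x#y#zs) - 1. M ((x#y#zs)!i) ((x#y#zs)!Suc i))
     = (\<Sum>i < Suc (length zs). M ((x#y#zs)!i) ((x#y#zs)!Suc i))" by simp
  also have "\<dots> = M x y + (\<Sum>i < length zs. M ((y#zs)!i) ((y#zs)!Suc i))"
    by (subst sum.lessThan_Suc_shift) simp
  finally show ?case using "3.IH"(2) by simp
qed auto

lemma pc_cyc:
  assumes "length t = n" "n \<ge> 1"
  shows "pc M (t @ [hd t]) = (\<Sum>i<n. M (t!i) (t!(Suc i mod n)))"
proof -
  have "pc M (t @ [hd t]) = (\<Sum>i<n. M ((t @ [hd t])!i) ((t @ [hd t])!Suc i))"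
    using assms by (simp add: pc_sum)
  also have "\<dots> = (\<Sum>i<n. M (t!i) (t!(Suc i mod n)))"
  proof (rule sum.cong)
    fix i assume "i \<in> {..<n}"
    then have i: "i < n" by simp
    have a: "(t @ [hd t])!i = t!i" using i assms by (simp add: nth_append)
    have b: "(t @ [hd t])!Suc i = t!(Suc i mod n)"
    proof (cases "Suc i < n")
      case True then show ?thesis using assms by (simp add: nth_append)
    next
      case False
      then have "Suc i = n" using i by simp
      then show ?thesis using assms by (cases t) (auto simp: nth_append)
    qed
    show "M ((t @ [hd t])!i) ((t @ [hd t])!Suc i) = M (t!i) (t!(Suc i mod n))" using a b by simp
  qed simp
  finally show ?thesis .
qed

lemma tsp_set_finite:
  fixes M :: "nat \<Rightarrow> nat \<Rightarrow> nat" and K :: nat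
  assumes "\<forall>i j. M i j \<le> K"
  shows "finite {(\<Sum>i<n. M (\<sigma> i) (\<sigma> (Suc i mod n))) | \<sigma>. bij_betw \<sigma> {..<n} {..<n}}"
proof (rule finite_subset)
  show "{(\<Sum>i<n. M (\<sigma> i) (\<sigma> (Suc i mod n))) | \<sigma>. bij_betw \<sigma> {..<n} {..<n}} \<subseteq> {..n * K}"
  proof
    fix x assume "x \<in> {(\<Sum>i<n. M (\<sigma> i) (\<sigma> (Suc i mod n))) | \<sigma>. bij_betw \<sigma> {..<n} {..<n}}"
    then obtain \<sigma> where x: "x = (\<Sum>i<n. M (\<sigma> i) (\<sigma> (Suc i mod n)))" by blast
    have "x \<le> (\<Sum>i<n. K)" unfolding x by (rule sum_mono) (use assms in auto)
    then show "x \<in> {..n * K}" by simp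
  qed
qed simp

lemma tsp_upper:
  assumes "\<forall>i j. M i j \<le> K" "distinct t" "set t = {..<n}" "n \<ge> 1"
  shows "tsp_cost n M \<le> pc M (t @ [hd t])"
proof -
  have len: "length t = n" using assms(2,3) distinct_card by fastforce
  have bij: "bij_betw ((!) t) {..<n} {..<n}"
    by (rule bij_betw_nth) (use assms len in auto)
  have "pc M (t @ [hd t]) \<in> {(\<Sum>i<n. M (\<sigma> i) (\<sigma> (Suc i mod n))) | \<sigma>. bij_betw \<sigma> {..<n} {..<n}}"
    using pc_cyc[OF len assms(4), of M] bij by blast
  then show ?thesis unfolding tsp_cost_def using tsp_set_finite[OF assms(1)] by (rule Min_le[rotated])
qed

lemma M0_term:
  assumes "a < n" "b < n" "a \<noteq> b"
  shows "2 \<le> MS n UNIV a b + of_bool (a = 0) + of_bool (b = 0)"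
  using assms unfolding MS_def Bl_def by auto

lemma sucmod_inj:
  assumes "i < n" "j < n" "Suc i mod n = Suc j mod n"
  shows "i = j"
  using assms by (auto simp: mod_Suc split: if_splits)

lemma M0_tour:
  assumes "bij_betw \<sigma> {..<n} {..<n}" "n \<ge> 2"
  shows "2 * n \<le> (\<Sum>i<n. MS n UNIV (\<sigma> i) (\<sigma> (Suc i mod n))) + 2"
proof -
  have inj: "inj_on \<sigma> {..<n}" using assms(1) bij_betw_def by blast
  have rng: "\<And>i. i < n \<Longrightarrow> \<sigma> i < n" using assms(1) bij_betwE by blast
  have sm: "\<And>i. i < n \<Longrightarrow> Suc i mod n < n" using assms(2) by simp
  have ne: "\<And>i. i < n \<Longrightarrow> i \<noteq> Suc i mod n" using assms(2) by (auto simp: mod_Suc)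
  have "(\<Sum>i<n. (2::nat)) \<le> (\<Sum>i<n. MS n UNIV (\<sigma> i) (\<sigma> (Suc i mod n)) + of_bool (\<sigma> i = 0) + of_bool (\<sigma> (Suc i mod n) = 0))"
  proof (rule sum_mono)
    fix i assume "i \<in> {..<n}"
    then have i: "i < n" by simp
    have "\<sigma> i \<noteq> \<sigma> (Suc i mod n)" using inj ne[OF i] i sm[OF i] by (auto dest: inj_onD)
    then show "2 \<le> MS n UNIV (\<sigma> i) (\<sigma> (Suc i mod n)) + of_bool (\<sigma> i = 0) + of_bool (\<sigma> (Suc i mod n) = 0)"
      using M0_term rng[OF i] rng[OF sm[OF i]] by blast
  qed
  also have "\<dots> = (\<Sum>i<n. MS n UNIV (\<sigma> i) (\<sigma> (Suc i mod n))) + card ({..<n} \<inter> {i. \<sigma> i = 0})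
       + card ({..<n} \<inter> {i. \<sigma> (Suc i mod n) = 0})"
    by (simp add: sum.distrib)
  also have "card ({..<n} \<inter> {i. \<sigma> i = 0}) \<le> Suc 0"
    using inj by (subst card_le_Suc0_iff_eq) (auto simp: inj_on_def)
  also have "card ({..<n} \<inter> {i. \<sigma> (Suc i mod n) = 0}) \<le> Suc 0"
  proof (subst card_le_Suc0_iff_eq)
    show "\<forall>x\<in>{..<n} \<inter> {i. \<sigma> (Suc i mod n) = 0}. \<forall>y\<in>{..<n} \<inter> {i. \<sigma> (Suc i mod n) = 0}. x = y"
    proof (intro ballI)
      fix x y assume "x \<in> {..<n} \<inter> {i. \<sigma> (Suc i mod n) = 0}" "y \<in> {..<n} \<inter> {i. \<sigma> (Suc i mod n) = 0}"
      then have "x < n" "y < n" "\<sigma> (Suc x mod n) = \<sigma> (Suc y mod n)" by auto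
      then have "Suc x mod n = Suc y mod n" using inj sm by (auto dest: inj_onD)
      then show "x = y" using sucmod_inj \<open>x < n\<close> \<open>y < n\<close> by blast
    qed
  qed simp
  finally show ?thesis by simp
qed

lemma tsp_M0:
  assumes "n \<ge> 2"
  shows "2 * n \<le> tsp_cost n (MS n UNIV) + 2"
proof -
  let ?A = "{(\<Sum>i<n. MS n UNIV (\<sigma> i) (\<sigma> (Suc i mod n))) | \<sigma>. bij_betw \<sigma> {..<n} {..<n}}"
  have f: "finite ?A" by (rule tsp_set_finite[of _ 2]) (simp add: MS_le2)
  have ne: "?A \<noteq> {}" using bij_betw_id[of "{..<n}"] by (auto simp: id_def)
  have "Min ?A \<in> ?A" using f ne by (rule Min_in)
  then obtain \<sigma> where "bij_betw \<sigma> {..<n} {..<n}" "Min ?A = (\<Sum>i<n. MS n UNIV (\<sigma> i) (\<sigma> (Suc i mod n)))" by blast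
  then show ?thesis unfolding tsp_cost_def using M0_tour assms by simp
qed




definition EE :: "nat \<Rightarrow> (nat \<times> nat) set \<Rightarrow> nat \<Rightarrow> nat \<Rightarrow> bool" where
  "EE n S u v \<longleftrightarrow> u < n \<and> v < n \<and> u \<noteq> v \<and> \<not> Bl S u v"

lemma walk_len1: "is_walk E p \<Longrightarrow> length p = Suc 0 \<Longrightarrow> hd p = last p"
  by (cases p) auto

lemma walk_len2: "is_walk E p \<Longrightarrow> length p = 2 \<Longrightarrow> E (hd p) (last p)"
  unfolding is_walk_def
  by (cases p; cases "tl p") (auto simp: numeral_2_eq_2 dest: spec[of _ 0])

lemma gdist_MS:
  assumes "i < n" "j < n"
  shows "gdist (EE n S) i j = MS n S i j"
proof -
  let ?P = "\<lambda>k. \<exists>p. is_walk (EE n S) p \<and> hd p = i \<and> last p = j \<and> length p = Suc k"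
  show ?thesis
  proof (cases "i = j")
    case True
    have "?P 0" by (rule exI[of _ "[i]"]) (auto simp: is_walk_def True)
    then have "Least ?P = 0" by (rule Least_equality) simp
    then show ?thesis unfolding gdist_def MS_def using True assms by simp
  next
    case ne: False
    have n0: "\<not> ?P 0" using walk_len1 ne by fastforce
    show ?thesis
    proof (cases "Bl S i j")
      case False
      have "?P 1" by (rule exI[of _ "[i,j]"]) (use assms ne False in \<open>auto simp: is_walk_def EE_def\<close>)
      then have "Least ?P = 1" by (rule Least_equality) (use n0 in \<open>auto simp: not_less_eq_eq[symmetric]\<close>)
      then show ?thesis unfolding gdist_def MS_def using False assms ne by simp
    next
      case True
      then have i0: "i \<noteq> 0" "j \<noteq> 0" unfolding Bl_def by auto
      have "is_walk (EE n S) [i,0,j]"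
        unfolding is_walk_def EE_def Bl_def using assms i0
        by (auto simp: less_Suc_eq nth_Cons split: nat.splits)
      then have "?P 2" by (intro exI[of _ "[i,0,j]"]) auto
      moreover have n1: "\<not> ?P 1"
      proof
        assume "?P 1"
        then obtain p where "is_walk (EE n S) p" "hd p = i" "last p = j" "length p = 2" by auto
        then have "EE n S i j" using walk_len2 by fastforce
        then show False using True unfolding EE_def by simp
      qed
      ultimately have "Least ?P = 2"
        by (intro Least_equality) (use n0 n1 in \<open>auto simp: not_less_eq_eq[symmetric] numeral_2_eq_2 le_Suc_eq\<close>)
      then show ?thesis unfolding gdist_def MS_def using True assms ne by simp
    qed
  qed
qed

lemma graphic_MS:
  assumes "n \<ge> 1"
  shows "graphic_instance n (MS n S)"
  unfolding graphic_instance_def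
proof (intro exI conjI)
  show "is_graph n (EE n S)" unfolding is_graph_def EE_def using Bl_sym by auto
  show "connected_graph n (EE n S)" unfolding connected_graph_def
  proof (intro allI impI)
    fix u v assume uv: "u < n" "v < n"
    show "\<exists>p. is_walk (EE n S) p \<and> hd p = u \<and> last p = v"
    proof (cases "u = v")
      case True then show ?thesis by (intro exI[of _ "[u]"]) (auto simp: is_walk_def)
    next
      case ne: False
      show ?thesis
      proof (cases "Bl S u v")
        case False then show ?thesis using uv ne
          by (intro exI[of _ "[u,v]"]) (auto simp: is_walk_def EE_def)
      next
        case True
        then have i0: "u \<noteq> 0" "v \<noteq> 0" unfolding Bl_def by auto
        have "is_walk (EE n S) [u,0,v]"
          unfolding is_walk_def EE_def Bl_def using uv i0 assms
          by (auto simp: less_Suc_eq nth_Cons split: nat.splits)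
        then show ?thesis by (intro exI[of _ "[u,0,v]"]) auto
      qed
    qed
  qed
  show "MS n S = (\<lambda>i j. if i < n \<and> j < n then gdist (EE n S) i j else 0)"
    by (auto simp: fun_eq_iff gdist_MS) (auto simp: MS_def)
qed

lemma onetwo_MS: "onetwo_instance n (MS n S)"
  unfolding onetwo_instance_def MS_def using Bl_sym by auto

lemma dg_le: "dg n S w \<le> card {p\<in>S. fst p = w} + card {p\<in>S. snd p = w}" if "finite S"
proof -
  have "{u. u < n \<and> Bl S w u} \<subseteq> snd ` {p\<in>S. fst p = w} \<union> fst ` {p\<in>S. snd p = w}"
    unfolding Bl_def by force
  then have "dg n S w \<le> card (snd ` {p\<in>S. fst p = w} \<union> fst ` {p\<in>S. snd p = w})"
    unfolding dg_def using that by (intro card_mono) auto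
  also have "\<dots> \<le> card (snd ` {p\<in>S. fst p = w}) + card (fst ` {p\<in>S. snd p = w})" by (rule card_Un_le)
  also have "\<dots> \<le> card {p\<in>S. fst p = w} + card {p\<in>S. snd p = w}"
    by (intro add_mono card_image_le) (use that in auto)
  finally show ?thesis .
qed

lemma sum_fibre: "finite S \<Longrightarrow> (\<Sum>w<(n::nat). card {p\<in>S. f p = w}) \<le> card S"
proof -
  assume fS: "finite S"
  have "(\<Sum>w<n. card {p\<in>S. f p = w}) = card (\<Union>w<n. {p\<in>S. f p = w})"
    by (rule card_UN_disjoint[symmetric]) (use fS in auto)
  also have "\<dots> \<le> card S" by (rule card_mono) (use fS in auto)
  finally show ?thesis .
qed

lemma dg_sum: "finite S \<Longrightarrow> (\<Sum>w<n. dg n S w) \<le> 2 * card S"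
proof -
  assume fS: "finite S"
  have "(\<Sum>w<n. dg n S w) \<le> (\<Sum>w<n. card {p\<in>S. fst p = w} + card {p\<in>S. snd p = w})"
    by (rule sum_mono) (rule dg_le[OF fS])
  also have "\<dots> = (\<Sum>w<n. card {p\<in>S. fst p = w}) + (\<Sum>w<n. card {p\<in>S. snd p = w})"
    by (rule sum.distrib)
  also have "\<dots> \<le> card S + card S" by (intro add_mono sum_fibre fS)
  finally show ?thesis by simp
qed

lemma H_bound:
  assumes "finite S"
  shows "card {w. w < n \<and> t \<le> dg n S w} * t \<le> 2 * card S"
proof -
  let ?H = "{w. w < n \<and> t \<le> dg n S w}"
  have "card ?H * t = (\<Sum>w\<in>?H. t)" by simp
  also have "\<dots> \<le> (\<Sum>w\<in>?H. dg n S w)" by (rule sum_mono) auto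
  also have "\<dots> \<le> (\<Sum>w<n. dg n S w)" by (rule sum_mono2) auto
  also have "\<dots> \<le> 2 * card S" by (rule dg_sum[OF assms])
  finally show ?thesis .
qed




lemma tsp_MS_bound:
  assumes fS: "finite S" and t1: "1 \<le> t" and big: "3 * t + card {w. w < n \<and> t \<le> dg n S w} < n"
  shows "tsp_cost n (MS n S) \<le> n + 1 + 3 * card {w. w < n \<and> t \<le> dg n S w}"
proof -
  define H where "H = {w. w < n \<and> t \<le> dg n S w}"
  define L where "L = {..<n} - H"
  let ?M = "MS n S"
  have fH: "finite H" unfolding H_def by auto
  have LH: "card L = n - card H" unfolding L_def by (subst card_Diff_subset) (auto simp: H_def)
  have Ln: "L \<subseteq> {..<n}" unfolding L_def by auto
  have dgL: "\<forall>v\<in>L. dg n S v < t" unfolding L_def H_def by auto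
  have dg0: "dg n S 0 = 0" unfolding dg_def Bl_def by simp
  have n0: "0 < n" using big by simp
  have zL: "0 \<in> L" unfolding L_def H_def using dg0 t1 n0 by auto
  obtain p where p: "p \<noteq> []" "distinct p" "set p \<subseteq> L" "pc ?M p + 1 = length p" "card (L - set p) < t"
    using greedy[OF Ln dgL, of "[0]"] zL by auto
  have fL: "finite L" using Ln finite_subset by blast
  have lp: "length p = card (set p)" using p(2) by (simp add: distinct_card)
  have Ls: "L = set p \<union> (L - set p)" using p(3) by blast
  have "card L \<le> card (set p) + card (L - set p)"
    by (subst Ls) (rule card_Un_le)
  then have lp2: "length p \<ge> 2 * t + 2" using lp LH p(5) big unfolding H_def by linarith
  have close: "pc ?M (p @ [hd p]) \<le> length p + 1"
    using pc_snoc[OF p(1), of ?M "hd p"] p(4) MS_le2[of n S "last p" "hd p"] by linarith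
  define R where "R = {..<n} - set p"
  have fR: "finite R" unfolding R_def by auto
  obtain tr where tr: "distinct tr" "set tr = set p \<union> R" "tr \<noteq> []" "length tr = length p + card R"
      "pc ?M (tr @ [hd tr]) \<le> pc ?M (p @ [hd p]) + card R + 3 * card {w\<in>R. length p \<le> 2 * dg n S w + 2}"
  proof -
    have sp: "set p \<subseteq> {..<n}" using p(3) Ln by auto
    have a1: "R \<inter> set p = {}" unfolding R_def by blast
    have a2: "set p \<union> R \<subseteq> {..<n}" using sp unfolding R_def by blast
    have a3: "length p \<ge> 2" using lp2 by simp
    show ?thesis using insert_all[OF fR a1 p(1) p(2) a2 a3, of S] that by blast
  qed
  have sp: "set p \<subseteq> {..<n}" using p(3) Ln by auto
  have str: "set tr = {..<n}" using tr(2) sp unfolding R_def by auto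
  have "card R = n - card (set p)" unfolding R_def using sp by (subst card_Diff_subset) auto
  moreover have "card (set p) \<le> n" using card_mono[OF _ sp] by simp
  ultimately have cR: "length p + card R = n" unfolding lp by simp
  have bad: "{w\<in>R. length p \<le> 2 * dg n S w + 2} \<subseteq> H"
  proof
    fix w assume w: "w \<in> {w\<in>R. length p \<le> 2 * dg n S w + 2}"
    then have "w < n" unfolding R_def by auto
    moreover have "t \<le> dg n S w" using w lp2 by auto
    ultimately show "w \<in> H" unfolding H_def by auto
  qed
  have cb: "card {w\<in>R. length p \<le> 2 * dg n S w + 2} \<le> card H" by (rule card_mono[OF fH bad])
  have "tsp_cost n ?M \<le> pc ?M (tr @ [hd tr])"
    by (rule tsp_upper[of _ 2]) (use tr(1) str n0 MS_le2 in auto)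
  also have "\<dots> \<le> n + 1 + 3 * card H" using tr(5) close cR cb by linarith
  finally show ?thesis unfolding H_def .
qed




lemma agree_S: "(i,j) \<in> S \<Longrightarrow> MS n S i j = MS n UNIV i j"
  unfolding MS_def Bl_def by auto

lemma core:
  fixes \<epsilon> :: real
  assumes PU: "P n (MS n UNIV)" and PS: "\<And>S. P n (MS n S)"
    and est: "estimates_within P n (2 - \<epsilon>) T" and ep: "\<epsilon> > 0"
    and n16: "n \<ge> 16" and nb: "real n \<ge> 8 / \<epsilon>"
  shows "1/400 * \<epsilon> * real n ^ 2 \<le> real (num_queries T (MS n UNIV))"
proof (rule ccontr)
  let ?M0 = "MS n UNIV"
  define q where "q = num_queries T ?M0"
  define S where "S = qset T ?M0"
  assume "\<not> ?thesis"
  then have qlt: "real q * 400 < \<epsilon> * real n ^ 2" unfolding q_def by simp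
  have fS: "finite S" unfolding S_def by (rule qset_finite)
  have cS: "card S \<le> q" unfolding S_def q_def by (rule qset_card)
  have runeq: "run T (MS n S) = run T ?M0"
    by (rule run_agree, rule agree_S, unfold S_def)
  have e1: "real (tsp_cost n ?M0) \<le> run T ?M0" using est PU unfolding estimates_within_def by blast
  have e2: "run T (MS n S) \<le> (2 - \<epsilon>) * real (tsp_cost n (MS n S))"
    using est PS unfolding estimates_within_def by blast
  have "2 * n \<le> tsp_cost n ?M0 + 2" using tsp_M0[of n] n16 by simp
  then have "real (2 * n) \<le> real (tsp_cost n ?M0 + 2)" by (simp only: of_nat_le_iff)
  then have lo: "2 * real n \<le> real (tsp_cost n ?M0) + 2" by simp
  have key: "2 * real n - 2 \<le> (2 - \<epsilon>) * real (tsp_cost n (MS n S))" using lo e1 e2 runeq by linarith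
  show False
  proof (cases "\<epsilon> \<ge> 2")
    case True
    have "(2 - \<epsilon>) * real (tsp_cost n (MS n S)) \<le> 0"
      using True by (simp add: mult_nonpos_nonneg)
    then show False using key n16 by simp
  next
    case False
    define t where "t = n div 8"
    define H where "H = {w. w < n \<and> t \<le> dg n S w}"
    have hb: "card H * t \<le> 2 * q" using H_bound[OF fS, of n t] cS unfolding H_def by linarith
    have t8: "8 * t \<le> n" "n < 8 * t + 8" unfolding t_def by auto
    have t1: "1 \<le> t" using t8 n16 by linarith
    have "real (card H * t) \<le> real (2 * q)" using hb by (simp only: of_nat_le_iff)
    then have hb': "real (card H) * real t \<le> 2 * real q" by simp
    have tn: "real n \<le> 16 * real t" using t8 t1 by linarith
    have h0: "0 \<le> real (card H)" by simp
    have hn: "real (card H) * real n \<le> 32 * real q"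
    proof -
      have "real (card H) * real n \<le> real (card H) * (16 * real t)" using mult_left_mono[OF tn h0] .
      then show ?thesis using hb' by linarith
    qed
    have np: "real n > 0" using n16 by simp
    have "real (card H) * real n * 400 < 32 * (\<epsilon> * real n ^ 2)" using hn qlt by linarith
    also have "\<dots> \<le> 32 * (2 * real n ^ 2)" using False by (intro mult_left_mono mult_right_mono) auto
    finally have "real (card H) * real n < (4/25) * real n * real n" by (simp add: power2_eq_square algebra_simps)
    then have hsm: "real (card H) < (4/25) * real n" using np by (simp add: mult_less_cancel_right)
    have "real (8 * t) \<le> real n" using t8(1) by (simp only: of_nat_le_iff)
    then have r8: "8 * real t \<le> real n" by simp
    have "3 * real t + real (card H) < real n" using r8 hsm np by linarith
    then have "real (3 * t + card H) < real n" by simp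
    then have "3 * t + card H < n" by (simp only: of_nat_less_iff)
    from tsp_MS_bound[OF fS t1 this[unfolded H_def]]
    have "real (tsp_cost n (MS n S)) \<le> real (n + 1 + 3 * card H)" unfolding H_def by (simp only: of_nat_le_iff)
    then have Y: "real (tsp_cost n (MS n S)) \<le> real n + 1 + 3 * real (card H)" by simp
    have "3 * real (card H) * real n * 400 < 96 * (\<epsilon> * real n ^ 2)" using hn qlt by linarith
    then have "3 * real (card H) * real n < (6/25) * \<epsilon> * real n * real n" by (simp add: power2_eq_square algebra_simps)
    then have h3: "3 * real (card H) < (6/25) * \<epsilon> * real n" using np by (simp add: mult_less_cancel_right)
    have Y2: "real (tsp_cost n (MS n S)) \<le> real n + 1 + (6/25) * \<epsilon> * real n" using Y h3 by linarith
    have "(2 - \<epsilon>) * real (tsp_cost n (MS n S)) \<le> (2 - \<epsilon>) * (real n + 1 + (6/25) * \<epsilon> * real n)"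
      using False Y2 by (intro mult_left_mono) auto
    also have "\<dots> = 2 * real n + 2 - (13/25) * (\<epsilon> * real n) - \<epsilon> - (6/25) * \<epsilon> * (\<epsilon> * real n)"
      by (simp add: field_simps)
    finally have k2: "2 * real n - 2 \<le> 2 * real n + 2 - (13/25) * (\<epsilon> * real n) - \<epsilon> - (6/25) * \<epsilon> * (\<epsilon> * real n)"
      using key by linarith
    have en: "\<epsilon> * real n \<ge> 8" using nb ep by (simp add: divide_le_eq mult.commute)
    have "0 \<le> (6/25) * \<epsilon> * (\<epsilon> * real n)" using ep en by simp
    then show False using k2 en ep by linarith
  qed
qed

theorem mainTheorem6:
  shows "\<exists>c>0. \<forall>\<epsilon>>0. \<exists>N. \<forall>n\<ge>N.
     (\<forall>T. estimates_within graphic_instance n (2 - \<epsilon>) T \<longrightarrow>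
        (\<exists>M. graphic_instance n M \<and> real (num_queries T M) \<ge> c * \<epsilon> * real n ^ 2)) \<and>
     (\<forall>T. estimates_within onetwo_instance n (2 - \<epsilon>) T \<longrightarrow>
        (\<exists>M. onetwo_instance n M \<and> real (num_queries T M) \<ge> c * \<epsilon> * real n ^ 2))"
proof (intro exI[of _ "1/400::real"] conjI allI impI)
  show "(0::real) < 1/400" by simp
next
  fix \<epsilon> :: real assume ep: "\<epsilon> > 0"
  show "\<exists>N. \<forall>n\<ge>N.
     (\<forall>T. estimates_within graphic_instance n (2 - \<epsilon>) T \<longrightarrow>
        (\<exists>M. graphic_instance n M \<and> real (num_queries T M) \<ge> 1/400 * \<epsilon> * real n ^ 2)) \<and>
     (\<forall>T. estimates_within onetwo_instance n (2 - \<epsilon>) T \<longrightarrow>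
        (\<exists>M. onetwo_instance n M \<and> real (num_queries T M) \<ge> 1/400 * \<epsilon> * real n ^ 2))"
  proof (intro exI[of _ "nat \<lceil>8 / \<epsilon>\<rceil> + 16"] allI impI conjI)
    fix n assume n: "nat \<lceil>8 / \<epsilon>\<rceil> + 16 \<le> n"
    have n16: "n \<ge> 16" using n by simp
    have nb: "real n \<ge> 8 / \<epsilon>"
    proof -
      have "nat \<lceil>8 / \<epsilon>\<rceil> \<le> n" using n by linarith
      then have "real (nat \<lceil>8 / \<epsilon>\<rceil>) \<le> real n" by (simp only: of_nat_le_iff)
      moreover have "8 / \<epsilon> \<le> real (nat \<lceil>8 / \<epsilon>\<rceil>)" by linarith
      ultimately show ?thesis by linarith
    qed
    fix T
    {
      assume "estimates_within graphic_instance n (2 - \<epsilon>) T"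
      then show "\<exists>M. graphic_instance n M \<and> real (num_queries T M) \<ge> 1/400 * \<epsilon> * real n ^ 2"
        using core[of graphic_instance n, OF graphic_MS graphic_MS _ ep n16 nb] n16
        by (intro exI[of _ "MS n UNIV"]) (auto intro: graphic_MS)
    next
      assume "estimates_within onetwo_instance n (2 - \<epsilon>) T"
      then show "\<exists>M. onetwo_instance n M \<and> real (num_queries T M) \<ge> 1/400 * \<epsilon> * real n ^ 2"
        using core[of onetwo_instance n, OF onetwo_MS onetwo_MS _ ep n16 nb]
        by (intro exI[of _ "MS n UNIV"]) (auto intro: onetwo_MS)
    }
  qed
qed


end
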